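(* Let $p\in\mathbb{N}$ and let $a,b,\alpha,\beta$ be positive real numbers such that $\alpha+\beta t>1$ for all $t\in(0,\infty)$. Define \[ \Omega(t)=\frac{p^{b\beta t}e^{a\beta\gamma t}\,\Gamma(\alpha+\beta t)^a}{\Gamma_p(\alpha+\beta t)^b},\qquad t\in(0,\infty). \] Then $\Omega$ is increasing on $(0,\infty)$, and for every $t\in(0,1)$, \[ \frac{p^{-b\beta t}e^{-a\beta\gamma t}\,\Gamma(\alpha)^a}{\Gamma_p(\alpha)^b} <\frac{\Gamma(\alpha+\beta t)^a}{\Gamma_p(\alpha+\beta t)^b} <\frac{p^{b\beta(1-t)}e^{a\beta\gamma(1-t)}\,\Gamma(\alpha+\beta)^a}{\Gamma_p(\alpha+\beta)^b}. \]
   Context: $\Gamma$ is Euler's Gamma function and $\gamma$ is the Euler–Mascheroni constant. For $p\in\mathbb{N}$ and $t>0$, the $p$-Gamma function is $\Gamma_p(t)=\frac{p!\,p^t}{t(t+1)\cdots(t+p)}$. *)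

theory Defs
  imports "HOL-Analysis.Analysis"
begin

definition Gamma_p :: "nat \<Rightarrow> real \<Rightarrow> real" where
  "Gamma_p p t = fact p * real p powr t / (\<Prod>k\<in>{0..p}. (t + real k))"

end

theory Submission imports Defs begin

lemma h_strict:
  fixes x y :: real assumes "1 \<le> x" "x < y"
  shows "euler_mascheroni * x + ln_Gamma x < euler_mascheroni * y + ln_Gamma y"
proof -
  have "\<exists>\<xi>. x < \<xi> \<and> \<xi> < y \<and> (euler_mascheroni * y + ln_Gamma y) - (euler_mascheroni * x + ln_Gamma x) = (y - x) * (euler_mascheroni + Digamma \<xi>)"
    using assms by (intro MVT2 derivative_intros impI allI) (auto elim!: nonpos_Ints_cases)
  then obtain \<xi> where xi: "x < \<xi>" "\<xi> < y" and eq: "(euler_mascheroni * y + ln_Gamma y) - (euler_mascheroni * x + ln_Gamma x) = (y - x) * (euler_mascheroni + Digamma \<xi>)"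
    by auto
  have "Digamma (1::real) < Digamma \<xi>" using xi assms by (intro Digamma_real_strict_mono) auto
  hence "euler_mascheroni + Digamma \<xi> > 0" by simp
  with eq assms show ?thesis by (smt (verit) mult_pos_pos)
qed

definition F :: "nat \<Rightarrow> real \<Rightarrow> real \<Rightarrow> real \<Rightarrow> real \<Rightarrow> real" where
  "F p a b \<alpha> x = a * (euler_mascheroni * x + ln_Gamma x) + b * (\<Sum>k\<in>{0..p}. ln (x + real k))
     - b * \<alpha> * ln (real p) - b * ln (fact p) - a * euler_mascheroni * \<alpha>"

lemma F_strict:
  assumes "a > 0" "b > 0" "1 \<le> x" "x < y"
  shows "F p a b \<alpha> x < F p a b \<alpha> y"
proof -
  have "(\<Sum>k\<in>{0..p}. ln (x + real k)) \<le> (\<Sum>k\<in>{0..p}. ln (y + real k))"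
    using assms by (intro sum_mono) auto
  hence "b * (\<Sum>k\<in>{0..p}. ln (x + real k)) \<le> b * (\<Sum>k\<in>{0..p}. ln (y + real k))"
    using assms by (intro mult_left_mono) auto
  moreover have "a * (euler_mascheroni * x + ln_Gamma x) < a * (euler_mascheroni * y + ln_Gamma y)"
    using assms h_strict by auto
  ultimately show ?thesis unfolding F_def by linarith
qed

lemma G_eq:
  fixes x \<alpha> a b :: real
  assumes "p \<ge> 1" "x > 0"
  shows "real p powr (b * (x - \<alpha>)) * exp (a * euler_mascheroni * (x - \<alpha>))
              * Gamma x powr a / Gamma_p p x powr b = exp (F p a b \<alpha> x)"
proof -
  have pp: "real p > 0" using assms by auto
  have prodpos: "(\<Prod>k\<in>{0..p}. (x + real k)) > 0" using assms by (intro prod_pos) auto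
  have gp: "Gamma_p p x > 0" unfolding Gamma_p_def using pp prodpos by auto
  have lnprod: "ln (\<Prod>k\<in>{0..p}. (x + real k)) = (\<Sum>k\<in>{0..p}. ln (x + real k))"
    using assms by (intro ln_prod) auto
  have lgp: "ln (Gamma_p p x) = ln (fact p) + x * ln (real p) - (\<Sum>k\<in>{0..p}. ln (x + real k))"
    unfolding Gamma_p_def using pp prodpos lnprod assms(2)
    by (subst ln_div) (auto simp: ln_mult ln_powr add_pos_nonneg)
  have g: "Gamma x = exp (ln_Gamma x)" using assms Gamma_real_pos_exp by auto
  have "real p powr (b * (x - \<alpha>)) = exp (b * (x - \<alpha>) * ln (real p))" using pp by (simp add: powr_def)
  moreover have "Gamma x powr a = exp (a * ln_Gamma x)" using g by (simp add: powr_def)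
  moreover have "Gamma_p p x powr b = exp (b * ln (Gamma_p p x))" using gp by (simp add: powr_def)
  ultimately have "real p powr (b * (x - \<alpha>)) * exp (a * euler_mascheroni * (x - \<alpha>))
              * Gamma x powr a / Gamma_p p x powr b =
     exp (b * (x - \<alpha>) * ln (real p) + a * euler_mascheroni * (x - \<alpha>) + a * ln_Gamma x - b * ln (Gamma_p p x))"
    by (simp add: exp_add exp_diff)
  also have "\<dots> = exp (F p a b \<alpha> x)" unfolding lgp F_def
    by (rule arg_cong[where f=exp]) (simp add: algebra_simps)
  finally show ?thesis .
qed
theorem theorem3p7:
  fixes p :: nat and a b \<alpha> \<beta> :: real
  assumes hp: "p \<ge> 1"
    and ha: "a > 0" and hb: "b > 0" and h\<alpha>: "\<alpha> > 0" and h\<beta>: "\<beta> > 0"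
    and hgt: "\<forall>t::real. t > 0 \<longrightarrow> \<alpha> + \<beta> * t > 1"
  defines "\<Omega> \<equiv> (\<lambda>t::real. real p powr (b * \<beta> * t) * exp (a * \<beta> * euler_mascheroni * t)
              * Gamma (\<alpha> + \<beta> * t) powr a / Gamma_p p (\<alpha> + \<beta> * t) powr b)"
  shows "strict_mono_on {0<..} \<Omega>
    \<and> (\<forall>t::real. 0 < t \<and> t < 1 \<longrightarrow>
        real p powr (- b * \<beta> * t) * exp (- a * \<beta> * euler_mascheroni * t)
          * Gamma \<alpha> powr a / Gamma_p p \<alpha> powr b
        < Gamma (\<alpha> + \<beta> * t) powr a / Gamma_p p (\<alpha> + \<beta> * t) powr b
      \<and> Gamma (\<alpha> + \<beta> * t) powr a / Gamma_p p (\<alpha> + \<beta> * t) powr b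
        < real p powr (b * \<beta> * (1 - t)) * exp (a * \<beta> * euler_mascheroni * (1 - t))
          * Gamma (\<alpha> + \<beta>) powr a / Gamma_p p (\<alpha> + \<beta>) powr b)"
proof -
  have a1: "\<alpha> \<ge> 1"
  proof (rule ccontr)
    assume "\<not> \<alpha> \<ge> 1"
    hence "(1 - \<alpha>) / \<beta> > 0" using h\<beta> by auto
    with hgt have "\<alpha> + \<beta> * ((1 - \<alpha>) / \<beta>) > 1" by blast
    with h\<beta> show False by simp
  qed
  have Om: "\<Omega> t = exp (F p a b \<alpha> (\<alpha> + \<beta> * t))" if "t \<ge> 0" for t
  proof -
    have x: "\<alpha> + \<beta> * t > 0" using that h\<beta> a1
      by (smt (verit) mult_nonneg_nonneg)
    have e: "\<alpha> + \<beta> * t - \<alpha> = \<beta> * t" by simp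
    show ?thesis using G_eq[OF hp x, where a=a and b=b and \<alpha>=\<alpha>] unfolding e \<Omega>_def
      by (simp add: mult.assoc mult.left_commute)
  qed
  have mono: "\<Omega> s < \<Omega> t" if "0 \<le> s" "s < t" for s t
  proof -
    have "\<beta> * s \<ge> 0" using that h\<beta> by simp
    have "F p a b \<alpha> (\<alpha> + \<beta> * s) < F p a b \<alpha> (\<alpha> + \<beta> * t)"
    proof (rule F_strict[OF ha hb])
      show "1 \<le> \<alpha> + \<beta> * s" using \<open>\<beta> * s \<ge> 0\<close> a1 by linarith
      show "\<alpha> + \<beta> * s < \<alpha> + \<beta> * t" using that h\<beta> by simp
    qed
    thus ?thesis using Om that by auto
  qed
  have part1: "strict_mono_on {0<..} \<Omega>"
    by (rule strict_mono_onI) (use mono in auto)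
  have part2: "real p powr (- b * \<beta> * t) * exp (- a * \<beta> * euler_mascheroni * t)
          * Gamma \<alpha> powr a / Gamma_p p \<alpha> powr b
        < Gamma (\<alpha> + \<beta> * t) powr a / Gamma_p p (\<alpha> + \<beta> * t) powr b
      \<and> Gamma (\<alpha> + \<beta> * t) powr a / Gamma_p p (\<alpha> + \<beta> * t) powr b
        < real p powr (b * \<beta> * (1 - t)) * exp (a * \<beta> * euler_mascheroni * (1 - t))
          * Gamma (\<alpha> + \<beta>) powr a / Gamma_p p (\<alpha> + \<beta>) powr b" if t: "0 < t" "t < 1" for t
  proof -
    define P where "P = real p powr (b * \<beta> * t)"
    define E where "E = exp (a * \<beta> * euler_mascheroni * t)"
    define G where "G = Gamma (\<alpha> + \<beta> * t) powr a / Gamma_p p (\<alpha> + \<beta> * t) powr b"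
    define G0 where "G0 = Gamma \<alpha> powr a / Gamma_p p \<alpha> powr b"
    define G1 where "G1 = Gamma (\<alpha> + \<beta>) powr a / Gamma_p p (\<alpha> + \<beta>) powr b"
    have pp: "real p > 0" using hp by auto
    have Pp: "P > 0" "E > 0" unfolding P_def E_def using pp by auto
    have O0: "\<Omega> 0 = G0" unfolding \<Omega>_def G0_def using pp by simp
    have Ot: "\<Omega> t = P * E * G" unfolding \<Omega>_def P_def E_def G_def by simp
    have O1: "\<Omega> 1 = real p powr (b * \<beta>) * exp (a * \<beta> * euler_mascheroni) * G1"
      unfolding \<Omega>_def G1_def by simp
    have i1: "G0 < P * E * G" using mono[of 0 t] t O0 Ot by simp
    have i2: "P * E * G < real p powr (b * \<beta>) * exp (a * \<beta> * euler_mascheroni) * G1"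
      using mono[of t 1] t Ot O1 by simp
    have m1: "real p powr (- b * \<beta> * t) = 1 / P" unfolding P_def
      by (simp add: powr_minus divide_inverse)
    have m2: "exp (- a * \<beta> * euler_mascheroni * t) = 1 / E" unfolding E_def
      by (simp add: exp_minus divide_inverse)
    have m3: "real p powr (b * \<beta> * (1 - t)) = real p powr (b * \<beta>) / P" unfolding P_def
      by (simp add: powr_diff[symmetric] algebra_simps)
    have m4: "exp (a * \<beta> * euler_mascheroni * (1 - t)) = exp (a * \<beta> * euler_mascheroni) / E"
      unfolding E_def by (simp add: exp_diff[symmetric] algebra_simps)
    have c1: "1 / P * (1 / E) * G0 < G" using i1 Pp by (simp add: field_simps)
    have c2: "G < real p powr (b * \<beta>) / P * (exp (a * \<beta> * euler_mascheroni) / E) * G1"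
      using i2 Pp by (simp add: field_simps)
    show ?thesis using c1 c2 unfolding m1 m2 m3 m4 G_def G0_def G1_def
      by (simp add: mult.assoc)
  qed
  show ?thesis using part1 part2 by blast
qed

end
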